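(* Let $\omega$ be a primitive $3$rd root of unity, $B = \mathbb{Z}_3[\omega] = \mathbb{Z}_3 + \mathbb{Z}_3\omega \cong \mathbb{Z}_3^2$, and $G_0 = \langle w \rangle \ltimes B$ where $\langle w \rangle \cong C_3$ acts on $B$ by multiplication by $\omega$. Then every open subgroup of $G_0$ not contained in $B$ is isomorphic to $G_0$, and $G_0$ has constant generating number $2$ on open subgroups, i.e.\ $d(H) = 2$ for every open subgroup $H$ of $G_0$.
   Context: $d(H)$ denotes the minimal number of topological generators of a profinite group $H$. *)

theory Defs
  imports "HOL-Algebra.Algebra"
begin

section \<open>The 3-adic integers Z_3, as coherent sequences of residues mod 3^n\<close>

definition zp :: "(nat \<Rightarrow> int) set" where
  "zp = {x. \<forall>n. 0 \<le> x n \<and> x n < 3 ^ n \<and> x n = x (Suc n) mod 3 ^ n}"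

definition zp_zero :: "nat \<Rightarrow> int" where
  "zp_zero = (\<lambda>n. 0)"

definition zp_add :: "(nat \<Rightarrow> int) \<Rightarrow> (nat \<Rightarrow> int) \<Rightarrow> (nat \<Rightarrow> int)" where
  "zp_add x y = (\<lambda>n. (x n + y n) mod 3 ^ n)"

definition zp_neg :: "(nat \<Rightarrow> int) \<Rightarrow> (nat \<Rightarrow> int)" where
  "zp_neg x = (\<lambda>n. (- x n) mod 3 ^ n)"

text \<open>An element (a, b) stands for a + b omega. Multiplication by omega:
  (a + b omega) omega = -b + (a - b) omega.\<close>

definition om :: "(nat \<Rightarrow> int) \<times> (nat \<Rightarrow> int) \<Rightarrow> (nat \<Rightarrow> int) \<times> (nat \<Rightarrow> int)" where
  "om p = (case p of (a, b) \<Rightarrow> (zp_neg b, zp_add a (zp_neg b)))"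

text \<open>(k, a, b) stands for beta w^k with beta = a + b omega, k in {0,1,2};
  (beta w^k)(beta' w^k') = (beta + omega^k beta') w^(k+k').\<close>

type_synonym g0elt = "nat \<times> (nat \<Rightarrow> int) \<times> (nat \<Rightarrow> int)"

definition g0_mult :: "g0elt \<Rightarrow> g0elt \<Rightarrow> g0elt" where
  "g0_mult x y =
     (let (c, d) = (om ^^ fst x) (fst (snd y), snd (snd y))
      in ((fst x + fst y) mod 3, zp_add (fst (snd x)) c, zp_add (snd (snd x)) d))"

definition G0 :: "g0elt monoid" where
  "G0 = \<lparr> carrier = {(k, a, b). k < 3 \<and> a \<in> zp \<and> b \<in> zp},
          monoid.mult = g0_mult,
          one = (0, zp_zero, zp_zero) \<rparr>"

definition B :: "g0elt set" where
  "B = {(k, a, b). k = 0 \<and> a \<in> zp \<and> b \<in> zp}"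

text \<open>Basic open neighbourhoods of the identity: N n = 3^n B. These form a
  neighbourhood basis of 1 for the profinite topology of G_0
  (= product topology of the discrete C_3 with Z_3 x Z_3).\<close>

definition Nbh :: "nat \<Rightarrow> g0elt set" where
  "Nbh n = {(k, a, b). k = 0 \<and> a \<in> zp \<and> b \<in> zp \<and> a n = 0 \<and> b n = 0}"

text \<open>A subgroup of a topological group is open iff it contains a neighbourhood
  of the identity.\<close>

definition open_subgroup :: "g0elt set \<Rightarrow> bool" where
  "open_subgroup H \<longleftrightarrow> subgroup H G0 \<and> (\<exists>n. Nbh n \<subseteq> H)"

text \<open>Topological closure in G_0: x is in the closure of A iff every
  neighbourhood x N_n meets A, i.e. x \<in> A N_n for all n.\<close>

definition g0_closure :: "g0elt set \<Rightarrow> g0elt set" where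
  "g0_closure A = (\<Inter>n. A <#>\<^bsub>G0\<^esub> Nbh n)"

definition top_generates :: "g0elt set \<Rightarrow> g0elt set \<Rightarrow> bool" where
  "top_generates H S \<longleftrightarrow> S \<subseteq> H \<and> g0_closure (generate G0 S) = H"

definition dgen :: "g0elt set \<Rightarrow> nat" where
  "dgen H = (LEAST n. \<exists>S. finite S \<and> card S = n \<and> top_generates H S)"

text \<open>Continuity of a group homomorphism between (subgroups of) G_0 is
  continuity at the identity.\<close>

definition cont_hom :: "g0elt set \<Rightarrow> (g0elt \<Rightarrow> g0elt) \<Rightarrow> bool" where
  "cont_hom H f \<longleftrightarrow> (\<forall>n. \<exists>m. f ` (H \<inter> Nbh m) \<subseteq> Nbh n)"

definition top_iso_G0 :: "g0elt set \<Rightarrow> bool" where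
  "top_iso_G0 H \<longleftrightarrow> (\<exists>f. f \<in> iso (G0\<lparr>carrier := H\<rparr>) G0 \<and> cont_hom H f
      \<and> cont_hom (carrier G0) (inv_into H f))"

end

theory Submission
  imports Defs
begin


datatype zw = ZW int int

fun re :: "zw \<Rightarrow> int" where "re (ZW a b) = a"
fun im :: "zw \<Rightarrow> int" where "im (ZW a b) = b"

lemma zw_eq_iff: "x = y \<longleftrightarrow> re x = re y \<and> im x = im y"
  by (cases x; cases y) auto

lemma zw_re_im[simp]: "ZW (re x) (im x) = x" by (cases x) auto

instantiation zw :: comm_ring_1
begin
definition "0 = ZW 0 0"
definition "1 = ZW 1 0"
definition "x + y = ZW (re x + re y) (im x + im y)"
definition "x - y = ZW (re x - re y) (im x - im y)"
definition "- x = ZW (- re x) (- im x)"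
definition "x * y = ZW (re x * re y - im x * im y) (re x * im y + im x * re y - im x * im y)"
instance
  by standard (auto simp: zw_eq_iff zero_zw_def one_zw_def plus_zw_def minus_zw_def uminus_zw_def times_zw_def algebra_simps)
end

lemma re_simps[simp]: "re 0 = 0" "re 1 = 1" "re (x+y) = re x + re y" "re (x - y) = re x - re y"
  "re (-x) = - re x" "re (x*y) = re x * re y - im x * im y"
  by (auto simp: zero_zw_def one_zw_def plus_zw_def minus_zw_def uminus_zw_def times_zw_def)
lemma im_simps[simp]: "im 0 = 0" "im 1 = 0" "im (x+y) = im x + im y" "im (x - y) = im x - im y"
  "im (-x) = - im x" "im (x*y) = re x * im y + im x * re y - im x * im y"
  by (auto simp: zero_zw_def one_zw_def plus_zw_def minus_zw_def uminus_zw_def times_zw_def)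

lemma re_of_nat[simp]: "re (of_nat n) = int n" and im_of_nat[simp]: "im (of_nat n) = 0"
  by (induction n) auto
lemma re_of_int[simp]: "re (of_int n) = n" and im_of_int[simp]: "im (of_int n) = 0"
  by (cases n; simp)+

lemma re_numeral[simp]: "re (numeral n) = numeral n" and im_numeral[simp]: "im (numeral n) = 0"
  using re_of_nat[of "numeral n"] im_of_nat[of "numeral n"] by simp_all

definition omg :: zw where "omg = ZW 0 1"
definition piw :: zw where "piw = ZW 1 (-1)"
definition cnj :: "zw \<Rightarrow> zw" where "cnj x = ZW (re x - im x) (- im x)"

lemma omg3: "omg ^ 3 = 1" by (simp add: omg_def zw_eq_iff numeral_3_eq_3)
lemma cnj_mult: "cnj (x*y) = cnj x * cnj y" by (simp add: cnj_def zw_eq_iff algebra_simps)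
lemma x_cnj: "x * cnj x = of_int (re x * re x - re x * im x + im x * im x)"
  by (simp add: cnj_def zw_eq_iff algebra_simps)
lemma pi_cnj: "piw * cnj piw = 3" by (simp add: piw_def cnj_def zw_eq_iff)
lemma pi_pow_cnj: "piw ^ m * cnj (piw ^ m) = 3 ^ m"
proof (induction m)
  case (Suc m) then show ?case using pi_cnj by (simp add: cnj_mult algebra_simps) (metis mult.assoc mult.left_commute)
qed (simp add: cnj_def zw_eq_iff)
lemma re_3pow[simp]: "re (3^m) = 3^m" and im_3pow[simp]: "im (3^m) = 0"
  using re_of_nat[of "3^m"] im_of_nat[of "3^m"] by simp_all
lemma pi_sq: "piw ^ 2 = 3 * (- omg)" by (simp add: piw_def omg_def zw_eq_iff power2_eq_square)


definition zideal :: "zw set \<Rightarrow> bool" where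
  "zideal I \<longleftrightarrow> 0 \<in> I \<and> (\<forall>x\<in>I. \<forall>y\<in>I. x + y \<in> I) \<and> (\<forall>x\<in>I. \<forall>r. r * x \<in> I)"

lemma zsub_int_mult:
  assumes "0 \<in> I" "\<And>x y. x \<in> I \<Longrightarrow> y \<in> I \<Longrightarrow> x - y \<in> I" "x \<in> I"
  shows "of_int c * x \<in> I"
proof -
  have neg: "- y \<in> I" if "y \<in> I" for y using assms(2)[OF assms(1) that] by simp
  have add: "y + z \<in> I" if "y \<in> I" "z \<in> I" for y z using assms(2)[OF that(1) neg[OF that(2)]] by simp
  have nat: "of_nat n * x \<in> I" for n
    by (induction n) (auto simp: assms algebra_simps intro: add)
  show ?thesis
  proof (cases "c \<ge> 0")
    case True then show ?thesis using nat[of "nat c"] by simp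
  next
    case False then show ?thesis using neg[OF nat[of "nat (-c)"]] by simp
  qed
qed

lemma zidealI:
  assumes "0 \<in> I" "\<And>x y. x \<in> I \<Longrightarrow> y \<in> I \<Longrightarrow> x - y \<in> I" "\<And>x. x \<in> I \<Longrightarrow> omg * x \<in> I"
  shows "zideal I"
proof -
  have neg: "- y \<in> I" if "y \<in> I" for y using assms(2)[OF assms(1) that] by simp
  have add: "y + z \<in> I" if "y \<in> I" "z \<in> I" for y z using assms(2)[OF that(1) neg[OF that(2)]] by simp
  have "r * x \<in> I" if "x \<in> I" for r x
  proof -
    have e: "r * x = of_int (re r) * x + of_int (im r) * (omg * x)"
      by (simp add: zw_eq_iff omg_def algebra_simps)
    have "of_int (re r) * x \<in> I" by (rule zsub_int_mult[OF assms(1,2) that])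
    moreover have "of_int (im r) * (omg * x) \<in> I" by (rule zsub_int_mult[OF assms(1,2) assms(3)[OF that]])
    ultimately show ?thesis unfolding e by (rule add)
  qed
  then show ?thesis using assms(1) add unfolding zideal_def by simp
qed

lemma inpi_iff: "3 dvd (re x + im x) \<longleftrightarrow> (\<exists>y. x = piw * y)"
proof
  assume "3 dvd (re x + im x)"
  then obtain d where d: "re x + im x = 3 * d" by (auto simp: dvd_def)
  have "x = piw * ZW (re x - d) d" using d by (simp add: zw_eq_iff piw_def)
  then show "\<exists>y. x = piw * y" by blast
next
  assume "\<exists>y. x = piw * y"
  then obtain y where "x = piw * y" by blast
  then have "re x + im x = 3 * im y" by (simp add: piw_def)
  then show "3 dvd (re x + im x)" by simp
qed

lemma norm_mod3: "3 dvd (a*a - a*b + b*b) \<longleftrightarrow> 3 dvd (a + b)" for a b :: int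
proof -
  have e: "a*a - a*b + b*b = (a+b)*(a+b) + (-(a*b)) * 3" by (simp add: algebra_simps)
  have "3 dvd (a*a - a*b + b*b) \<longleftrightarrow> 3 dvd ((a+b)*(a+b))" unfolding e by (rule dvd_add_times_triv_right_iff)
  also have "\<dots> \<longleftrightarrow> 3 dvd (a+b)" using prime_dvd_mult_iff[of "3::int" "a+b" "a+b"] by simp
  finally show ?thesis .
qed

lemma zideal_class:
  assumes "zideal I" "piw ^ k \<in> I"
  shows "\<exists>m. I = {piw ^ m * r | r. True}"
  using assms
proof (induction k arbitrary: I)
  case 0
  then have "1 \<in> I" by simp
  then have "I = UNIV" using \<open>zideal I\<close> unfolding zideal_def by (metis UNIV_eq_I mult.right_neutral)
  then show ?case by (intro exI[of _ 0]) auto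
next
  case (Suc k)
  show ?case
  proof (cases "\<exists>u\<in>I. \<not> 3 dvd (re u + im u)")
    case True
    then obtain u where u: "u \<in> I" "\<not> 3 dvd (re u + im u)" by blast
    let ?N = "re u * re u - re u * im u + im u * im u"
    have "of_int ?N \<in> I" using u(1) \<open>zideal I\<close> x_cnj[of u] unfolding zideal_def by (metis mult.commute)
    moreover have "3 ^ Suc k \<in> I" using Suc.prems pi_pow_cnj[of "Suc k"] unfolding zideal_def by (metis mult.commute)
    moreover have "coprime ?N (3 ^ Suc k)"
    proof -
      have "\<not> 3 dvd ?N" using u(2) norm_mod3 by blast
      then have "coprime ?N 3" using prime_imp_coprime[of "3::int" ?N] by (simp add: coprime_commute)
      then show ?thesis by simp
    qed
    then obtain s t where "s * ?N + t * 3 ^ Suc k = 1"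
      by (metis bezout_int coprime_iff_gcd_eq_1)
    then have "of_int s * of_int ?N + of_int t * (3 ^ Suc k) = (1::zw)"
      by (metis of_int_1 of_int_add of_int_mult of_int_numeral of_int_power)
    ultimately have "1 \<in> I" using \<open>zideal I\<close> unfolding zideal_def by metis
    then have "I = UNIV" using \<open>zideal I\<close> unfolding zideal_def by (metis UNIV_eq_I mult.right_neutral)
    then show ?thesis by (intro exI[of _ 0]) auto
  next
    case False
    then have allpi: "\<forall>x\<in>I. \<exists>y. x = piw * y" using inpi_iff by blast
    define I' where "I' = {y. piw * y \<in> I}"
    have "zideal I'" using \<open>zideal I\<close> unfolding zideal_def I'_def by (simp add: distrib_left mult.left_commute)
    moreover have "piw ^ k \<in> I'" using Suc.prems unfolding I'_def by simp
    ultimately obtain m where m: "I' = {piw ^ m * r | r. True}" using Suc.IH by blast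
    have "I = {piw ^ Suc m * r | r. True}"
    proof (intro equalityI subsetI)
      fix x assume "x \<in> I"
      then obtain y where "x = piw * y" using allpi by blast
      with \<open>x \<in> I\<close> have "y \<in> I'" unfolding I'_def by simp
      then show "x \<in> {piw ^ Suc m * r | r. True}" using m \<open>x = piw * y\<close> by (auto simp: mult.assoc)
    next
      fix x assume "x \<in> {piw ^ Suc m * r | r. True}"
      then obtain r where "x = piw * (piw ^ m * r)" by (auto simp: mult.assoc)
      moreover have "piw ^ m * r \<in> I'" using m by blast
      ultimately show "x \<in> I" unfolding I'_def by simp
    qed
    then show ?thesis by blast
  qed
qed


type_synonym zp2 = "(nat \<Rightarrow> int) \<times> (nat \<Rightarrow> int)"

definition zl :: "int \<Rightarrow> int \<Rightarrow> (nat \<Rightarrow> int) \<Rightarrow> (nat \<Rightarrow> int) \<Rightarrow> (nat \<Rightarrow> int)" where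
  "zl c d x y = (\<lambda>n. (c * x n + d * y n) mod 3 ^ n)"
definition zc :: "int \<Rightarrow> (nat \<Rightarrow> int)" where "zc k = (\<lambda>n. k mod 3 ^ n)"

definition Zp2 :: "zp2 set" where "Zp2 = zp \<times> zp"
definition padd :: "zp2 \<Rightarrow> zp2 \<Rightarrow> zp2" where "padd p q = (zp_add (fst p) (fst q), zp_add (snd p) (snd q))"
definition pneg :: "zp2 \<Rightarrow> zp2" where "pneg p = (zp_neg (fst p), zp_neg (snd p))"
definition pzero :: zp2 where "pzero = (zp_zero, zp_zero)"
definition mz :: "zw \<Rightarrow> zp2 \<Rightarrow> zp2" where
  "mz r p = (zl (re r) (- im r) (fst p) (snd p), zl (im r) (re r - im r) (fst p) (snd p))"
definition io :: "zw \<Rightarrow> zp2" where "io z = (zc (re z), zc (im z))"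


definition mq :: "int \<Rightarrow> int \<Rightarrow> int \<Rightarrow> bool" where "mq m a b \<longleftrightarrow> a mod m = b mod m"
lemma mq_mod: "mq m (a mod m) a" by (simp add: mq_def)
lemma mq_add: "mq m a a' \<Longrightarrow> mq m b b' \<Longrightarrow> mq m (a + b) (a' + b')"
  unfolding mq_def by (metis mod_add_cong)
lemma mq_diff: "mq m a a' \<Longrightarrow> mq m b b' \<Longrightarrow> mq m (a - b) (a' - b')"
  unfolding mq_def by (metis mod_diff_cong)
lemma mq_mult: "mq m a a' \<Longrightarrow> mq m b b' \<Longrightarrow> mq m (a * b) (a' * b')"
  unfolding mq_def by (metis mod_mult_cong)
lemma mq_neg: "mq m a a' \<Longrightarrow> mq m (- a) (- a')"
  unfolding mq_def by (metis mod_minus_cong)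
lemma mq_refl: "mq m a a" by (simp add: mq_def)
lemmas mq_rules = mq_mod mq_add mq_diff mq_mult mq_neg mq_refl
lemma mqI: "mq m a x \<Longrightarrow> mq m b y \<Longrightarrow> x = y \<Longrightarrow> a mod m = b mod m"
  by (simp add: mq_def)

lemma zp_memD: "x \<in> zp \<Longrightarrow> 0 \<le> x n \<and> x n < 3 ^ n \<and> x n = x (Suc n) mod 3 ^ n"
  unfolding zp_def by blast

lemma zp_mod[simp]: "x \<in> zp \<Longrightarrow> x n mod 3 ^ n = x n"
  using zp_memD[of x n] by (simp add: mod_pos_pos_trivial)

lemma zp_le: assumes "x \<in> zp" "n \<le> m" shows "x m mod 3 ^ n = x n"
  using assms(2)
proof (induction m)
  case 0 then show ?case using zp_mod[OF assms(1), of 0] by simp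
next
  case (Suc m)
  show ?case
  proof (cases "n = Suc m")
    case True then show ?thesis using zp_mod[OF assms(1), of "Suc m"] by simp
  next
    case False
    then have "n \<le> m" using Suc.prems by simp
    have "x (Suc m) mod 3 ^ n = x (Suc m) mod 3 ^ m mod 3 ^ n"
      using \<open>n \<le> m\<close> by (simp add: mod_mod_cancel le_imp_power_dvd)
    also have "\<dots> = x m mod 3 ^ n" using zp_memD[OF assms(1), of m] by simp
    finally show ?thesis using Suc.IH[OF \<open>n \<le> m\<close>] by simp
  qed
qed

lemma zp_eqI: "x \<in> zp \<Longrightarrow> y \<in> zp \<Longrightarrow> (\<And>n. x n = y n) \<Longrightarrow> x = y" by auto

lemma zpI:
  assumes "\<And>n. f n = g n mod 3 ^ n" "\<And>n. g (Suc n) mod 3 ^ n = g n mod 3 ^ n"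
  shows "f \<in> zp"
proof -
  have "f n = f (Suc n) mod 3 ^ n" for n
  proof -
    have "f (Suc n) mod 3 ^ n = g (Suc n) mod 3 ^ Suc n mod 3 ^ n" by (simp only: assms(1))
    also have "\<dots> = g (Suc n) mod 3 ^ n" by (rule mod_mod_cancel) simp
    also have "\<dots> = f n" by (simp only: assms)
    finally show ?thesis by simp
  qed
  moreover have "0 \<le> f n \<and> f n < 3 ^ n" for n by (simp only: assms(1)) simp
  ultimately show ?thesis unfolding zp_def by blast
qed

lemma zl_zp[simp]: "x \<in> zp \<Longrightarrow> y \<in> zp \<Longrightarrow> zl c d x y \<in> zp"
  unfolding zl_def
proof (rule zpI[where g = "\<lambda>n. c * x n + d * y n"])
  fix n
  assume "x \<in> zp" "y \<in> zp"
  have hx: "x (Suc n) mod 3^n = x n" and hy: "y (Suc n) mod 3^n = y n"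
    using zp_memD[OF \<open>x \<in> zp\<close>, of n] zp_memD[OF \<open>y \<in> zp\<close>, of n] by simp_all
  have "(c * x (Suc n) + d * y (Suc n)) mod 3^n = (c * (x (Suc n) mod 3^n) + d * (y (Suc n) mod 3^n)) mod 3^n"
    by (rule mqI[where x = "c * x (Suc n) + d * y (Suc n)"], (rule mq_rules)+, simp)
  then show "(c * x (Suc n) + d * y (Suc n)) mod 3^n = (c * x n + d * y n) mod 3^n" by (simp only: hx hy)
qed simp

lemma zc_zp[simp]: "zc k \<in> zp"
  unfolding zc_def by (rule zpI[where g = "\<lambda>n. k"]) (simp_all add: mod_mod_cancel)

lemma zp_add_zl: "zp_add x y = zl 1 1 x y" by (simp add: zp_add_def zl_def)
lemma zp_neg_zl: "zp_neg x = zl (-1) 0 x y" by (simp add: zp_neg_def zl_def)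

lemma zp_add_zp[simp]: "x \<in> zp \<Longrightarrow> y \<in> zp \<Longrightarrow> zp_add x y \<in> zp" by (simp add: zp_add_zl)
lemma zp_neg_zp[simp]: "x \<in> zp \<Longrightarrow> zp_neg x \<in> zp" by (simp add: zp_neg_zl[where y = x])
lemma zp_zero_zp[simp]: "zp_zero \<in> zp" by (simp add: zp_def zp_zero_def)

lemma Zp2_iff: "p \<in> Zp2 \<longleftrightarrow> fst p \<in> zp \<and> snd p \<in> zp" by (cases p) (simp add: Zp2_def)

lemma padd_Zp2[simp]: "p \<in> Zp2 \<Longrightarrow> q \<in> Zp2 \<Longrightarrow> padd p q \<in> Zp2" by (simp add: Zp2_iff padd_def)
lemma pneg_Zp2[simp]: "p \<in> Zp2 \<Longrightarrow> pneg p \<in> Zp2" by (simp add: Zp2_iff pneg_def)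
lemma pzero_Zp2[simp]: "pzero \<in> Zp2" by (simp add: Zp2_iff pzero_def)
lemma mz_Zp2[simp]: "p \<in> Zp2 \<Longrightarrow> mz r p \<in> Zp2" by (simp add: Zp2_iff mz_def)
lemma io_Zp2[simp]: "io z \<in> Zp2" by (simp add: Zp2_iff io_def)

lemma p_eqI: "fst p = fst q \<Longrightarrow> snd p = snd q \<Longrightarrow> p = q" by (simp add: prod_eq_iff)

lemma mz_mz: "mz r (mz s p) = mz (r * s) p"
  unfolding mz_def zl_def
  by (rule p_eqI; rule ext; simp; (rule mqI, (rule mq_rules)+, simp add: algebra_simps))

lemma mz_one: "p \<in> Zp2 \<Longrightarrow> mz 1 p = p"
  unfolding mz_def zl_def by (rule p_eqI; rule ext; simp add: Zp2_iff)

lemma mz_padd: "mz r (padd p q) = padd (mz r p) (mz r q)"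
  unfolding mz_def zl_def padd_def zp_add_def
  by (rule p_eqI; rule ext; simp; (rule mqI, (rule mq_rules)+, simp add: algebra_simps))

lemma mz_add: "mz (r + s) p = padd (mz r p) (mz s p)"
  unfolding mz_def zl_def padd_def zp_add_def
  by (rule p_eqI; rule ext; simp; (rule mqI, (rule mq_rules)+, simp add: algebra_simps))

lemma mz_io: "mz r (io z) = io (r * z)"
  unfolding mz_def zl_def io_def zc_def
  by (rule p_eqI; rule ext; simp; (rule mqI, (rule mq_rules)+, simp add: algebra_simps))

lemma io_add: "io (z + w) = padd (io z) (io w)"
  unfolding io_def padd_def zp_add_def zc_def
  by (rule p_eqI; rule ext; simp; (rule mqI, (rule mq_rules)+, simp add: algebra_simps))

lemma io_neg: "io (- z) = pneg (io z)"
  unfolding io_def pneg_def zp_neg_def zc_def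
  by (rule p_eqI; rule ext; simp; (rule mqI, (rule mq_rules)+, simp add: algebra_simps))

lemma io_zero: "io 0 = pzero"
  unfolding io_def pzero_def zp_zero_def zc_def by simp

lemma mz_pneg: "mz r (pneg p) = pneg (mz r p)"
  unfolding mz_def zl_def pneg_def zp_neg_def
  by (rule p_eqI; rule ext; simp; (rule mqI, (rule mq_rules)+, simp add: algebra_simps))

lemma mz_pzero: "mz r pzero = pzero"
  unfolding mz_def zl_def pzero_def zp_zero_def by simp

lemma padd_assoc: "padd (padd p q) s = padd p (padd q s)"
  unfolding padd_def zp_add_def
  by (rule p_eqI; rule ext; simp; (rule mqI, (rule mq_rules)+, simp add: algebra_simps))

lemma padd_comm: "padd p q = padd q p"
  unfolding padd_def zp_add_def by (simp add: add.commute)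

lemma padd_zero: "p \<in> Zp2 \<Longrightarrow> padd pzero p = p"
  unfolding padd_def zp_add_def pzero_def zp_zero_def by (rule p_eqI; rule ext; simp add: Zp2_iff)

lemma padd_zero2: "p \<in> Zp2 \<Longrightarrow> padd p pzero = p"
  using padd_zero padd_comm by metis

lemma padd_neg: "padd (pneg p) p = pzero"
  unfolding padd_def zp_add_def pzero_def zp_zero_def pneg_def zp_neg_def
  by (rule p_eqI; rule ext; simp add: mod_add_left_eq)

lemma om_mz: "om p = mz omg p"
  unfolding om_def mz_def zl_def omg_def zp_neg_def zp_add_def
  by (cases p) (simp add: fun_eq_iff, rule allI, (rule mqI, (rule mq_rules)+, simp add: algebra_simps))

lemma om_pow: "p \<in> Zp2 \<Longrightarrow> (om ^^ k) p = mz (omg ^ k) p"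
proof (induction k)
  case 0 then show ?case by (simp add: mz_one)
next
  case (Suc k) then show ?case by (simp add: om_mz mz_mz mult.commute)
qed

lemma omg_pow_mod: "omg ^ (k mod 3) = omg ^ k"
proof -
  have "omg ^ k = omg ^ (3 * (k div 3) + k mod 3)" by simp
  also have "\<dots> = omg ^ (k mod 3)" by (simp only: power_add power_mult omg3) simp
  finally show ?thesis by simp
qed


lemma G0_carrier: "x \<in> carrier G0 \<longleftrightarrow> fst x < 3 \<and> snd x \<in> Zp2"
  by (cases x) (auto simp: G0_def Zp2_iff)
lemma G0_one: "\<one>\<^bsub>G0\<^esub> = (0, pzero)" by (simp add: G0_def pzero_def)
lemma G0_mult_raw: "x \<otimes>\<^bsub>G0\<^esub> y = g0_mult x y" by (simp add: G0_def)

lemma g0_mult_eq: "g0_mult (k, p) (l, q) = ((k + l) mod 3, padd p ((om ^^ k) q))"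
  by (simp add: g0_mult_def padd_def split: prod.split)

lemma G0_mult: "q \<in> Zp2 \<Longrightarrow> (k, p) \<otimes>\<^bsub>G0\<^esub> (l, q) = ((k + l) mod 3, padd p (mz (omg ^ k) q))"
  by (simp add: G0_mult_raw g0_mult_eq om_pow)

lemma G0_cI: "k < 3 \<Longrightarrow> p \<in> Zp2 \<Longrightarrow> (k, p) \<in> carrier G0" by (simp add: G0_carrier)

lemma group_G0: "group G0"
proof (rule groupI)
  fix x y assume "x \<in> carrier G0" "y \<in> carrier G0"
  then show "x \<otimes>\<^bsub>G0\<^esub> y \<in> carrier G0"
    by (cases x; cases y) (simp add: G0_carrier G0_mult)
next
  show "\<one>\<^bsub>G0\<^esub> \<in> carrier G0" by (simp add: G0_one G0_carrier)
next
  fix x y z assume "x \<in> carrier G0" "y \<in> carrier G0" "z \<in> carrier G0"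
  then obtain k p l q j r where xyz: "x = (k, p)" "y = (l, q)" "z = (j, r)"
    "k < 3" "l < 3" "j < 3" "p \<in> Zp2" "q \<in> Zp2" "r \<in> Zp2"
    by (cases x; cases y; cases z) (auto simp: G0_carrier)
  have e1: "((k + l) mod 3 + j) mod 3 = (k + (l + j) mod 3) mod 3" by presburger
  have e2: "omg ^ ((k + l) mod 3) = omg ^ k * omg ^ l" by (simp add: omg_pow_mod power_add)
  show "x \<otimes>\<^bsub>G0\<^esub> y \<otimes>\<^bsub>G0\<^esub> z = x \<otimes>\<^bsub>G0\<^esub> (y \<otimes>\<^bsub>G0\<^esub> z)"
    using xyz by (simp add: G0_mult e1 e2 padd_assoc mz_padd mz_mz)
next
  fix x assume "x \<in> carrier G0"
  then show "\<one>\<^bsub>G0\<^esub> \<otimes>\<^bsub>G0\<^esub> x = x"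
    by (cases x) (simp add: G0_one G0_carrier G0_mult mz_one padd_zero)
next
  fix x assume "x \<in> carrier G0"
  then obtain k p where x: "x = (k, p)" "k < 3" "p \<in> Zp2" by (cases x) (auto simp: G0_carrier)
  define j where "j = (3 - k) mod 3"
  have "k = 0 \<or> k = 1 \<or> k = 2" using x(2) by auto
  then have j: "j < 3" "(j + k) mod 3 = 0" by (auto simp: j_def)
  let ?y = "(j, mz (omg ^ j) (pneg p))"
  have "?y \<otimes>\<^bsub>G0\<^esub> x = \<one>\<^bsub>G0\<^esub>"
    using x j by (simp add: G0_mult G0_one mz_padd[symmetric] padd_neg mz_pzero)
  moreover have "?y \<in> carrier G0" using x j by (simp add: G0_carrier)
  ultimately show "\<exists>y\<in>carrier G0. y \<otimes>\<^bsub>G0\<^esub> x = \<one>\<^bsub>G0\<^esub>" by blast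
qed

interpretation G: group G0 by (rule group_G0)

lemma G0_inv: "k < 3 \<Longrightarrow> p \<in> Zp2 \<Longrightarrow>
  inv\<^bsub>G0\<^esub> (k, p) = ((3 - k) mod 3, mz (omg ^ ((3 - k) mod 3)) (pneg p))"
proof (rule G.inv_equality)
  assume x: "k < 3" "p \<in> Zp2"
  define j where "j = (3 - k) mod 3"
  have "k = 0 \<or> k = 1 \<or> k = 2" using x(1) by auto
  then have j: "j < 3" "(j + k) mod 3 = 0" by (auto simp: j_def)
  show "((3 - k) mod 3, mz (omg ^ ((3 - k) mod 3)) (pneg p)) \<otimes>\<^bsub>G0\<^esub> (k, p) = \<one>\<^bsub>G0\<^esub>"
    using x j unfolding j_def[symmetric] by (simp add: G0_mult G0_one mz_padd[symmetric] padd_neg mz_pzero)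
qed (auto simp: G0_carrier)

lemma G0_inv0: "p \<in> Zp2 \<Longrightarrow> inv\<^bsub>G0\<^esub> (0, p) = (0, pneg p)"
  using G0_inv[of 0 p] by (simp add: mz_one)


definition NB :: "nat \<Rightarrow> zp2 set" where "NB K = {p \<in> Zp2. fst p K = 0 \<and> snd p K = 0}"
definition tr :: "nat \<Rightarrow> zp2 \<Rightarrow> zw" where "tr K p = ZW (fst p K) (snd p K)"

lemma Nbh_iff: "x \<in> Nbh K \<longleftrightarrow> fst x = 0 \<and> snd x \<in> NB K"
  by (cases x) (auto simp: Nbh_def NB_def Zp2_iff)

lemma comp_simps:
  "fst (padd p q) n = (fst p n + fst q n) mod 3 ^ n" "snd (padd p q) n = (snd p n + snd q n) mod 3 ^ n"
  "fst (pneg p) n = (- fst p n) mod 3 ^ n" "snd (pneg p) n = (- snd p n) mod 3 ^ n"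
  "fst pzero n = 0" "snd pzero n = 0"
  "fst (mz r p) n = (re r * fst p n + - im r * snd p n) mod 3 ^ n"
  "snd (mz r p) n = (im r * fst p n + (re r - im r) * snd p n) mod 3 ^ n"
  "fst (io z) n = re z mod 3 ^ n" "snd (io z) n = im z mod 3 ^ n"
  by (simp_all add: padd_def zp_add_def pneg_def zp_neg_def pzero_def zp_zero_def mz_def zl_def io_def zc_def)

lemma NB_Zp2: "p \<in> NB K \<Longrightarrow> p \<in> Zp2" by (simp add: NB_def)

lemma zp_zero_below: "x \<in> zp \<Longrightarrow> x K = 0 \<Longrightarrow> n \<le> K \<Longrightarrow> x n = 0"
  using zp_le[of x n K] by simp

lemma NB_anti: "n \<le> K \<Longrightarrow> NB K \<subseteq> NB n"
  unfolding NB_def using zp_zero_below by (auto simp: Zp2_iff)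

lemma NB_padd: "p \<in> NB K \<Longrightarrow> q \<in> NB K \<Longrightarrow> padd p q \<in> NB K"
  by (simp add: NB_def comp_simps)
lemma NB_pneg: "p \<in> NB K \<Longrightarrow> pneg p \<in> NB K"
  by (simp add: NB_def comp_simps)
lemma NB_pzero: "pzero \<in> NB K"
  by (simp add: NB_def comp_simps)
lemma NB_mz: "p \<in> NB K \<Longrightarrow> mz r p \<in> NB K"
  by (simp add: NB_def comp_simps)

lemma padd_neg2: "padd p (pneg p) = pzero" using padd_neg padd_comm by metis

lemma trunc: assumes "p \<in> Zp2" shows "padd (pneg (io (tr K p))) p \<in> NB K"
  using assms unfolding NB_def by (simp add: comp_simps tr_def mod_add_left_eq)

lemma trunc_decomp: assumes "p \<in> Zp2" shows "p = padd (io (tr K p)) (padd (pneg (io (tr K p))) p)"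
  using assms by (simp add: padd_assoc[symmetric] padd_neg2 padd_zero)

lemma io_NB: "io z \<in> NB K \<longleftrightarrow> 3 ^ K dvd re z \<and> 3 ^ K dvd im z"
  by (simp add: NB_def comp_simps dvd_eq_mod_eq_0)

lemma zp_div:
  assumes x: "x \<in> zp" "x m = 0"
  shows "(\<lambda>n. x (n + m) div 3 ^ m) \<in> zp \<and> x = (\<lambda>n. (3 ^ m * (x (n + m) div 3 ^ m)) mod 3 ^ n)"
proof -
  define y where "y = (\<lambda>n. x (n + m) div 3 ^ m)"
  have xy: "x (n + m) = 3 ^ m * y n" for n
  proof -
    have "x (n + m) mod 3 ^ m = x m" using zp_le[OF x(1), of m "n + m"] by simp
    then have "x (n + m) mod 3 ^ m = 0" using x(2) by simp
    then show ?thesis unfolding y_def by (metis add.right_neutral mult_div_mod_eq)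
  qed
  have pos: "(0::int) < 3 ^ m" by simp
  have "y \<in> zp" unfolding zp_def
  proof (intro CollectI allI conjI)
    fix n
    have b: "0 \<le> x (n + m) \<and> x (n + m) < 3 ^ (n + m)" using zp_memD[OF x(1)] by blast
    show "0 \<le> y n" using b xy[of n] pos by (metis zero_le_mult_iff not_less)
    have "3 ^ m * y n < 3 ^ m * 3 ^ n" using b xy[of n] by (simp add: power_add mult.commute)
    then show "y n < 3 ^ n" using pos by simp
    have "x (n + m) = x (Suc n + m) mod 3 ^ (n + m)" using zp_le[OF x(1), of "n + m" "Suc n + m"] by simp
    moreover have "x (Suc n + m) = 3 ^ m * y (Suc n)" by (rule xy)
    ultimately have "3 ^ m * y n = (3 ^ m * y (Suc n)) mod (3 ^ m * 3 ^ n)"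
      by (simp only: xy power_add mult.commute)
    also have "\<dots> = 3 ^ m * (y (Suc n) mod 3 ^ n)" by (rule mod_mult_mult1)
    finally show "y n = y (Suc n) mod 3 ^ n" using pos by simp
  qed
  moreover have "x = (\<lambda>n. (3 ^ m * y n) mod 3 ^ n)"
  proof
    fix n show "x n = (3 ^ m * y n) mod 3 ^ n"
      using zp_le[OF x(1), of n "n + m"] xy[of n] by simp
  qed
  ultimately show ?thesis unfolding y_def by simp
qed

lemma NB_div:
  assumes "p \<in> NB m" shows "\<exists>y \<in> Zp2. p = mz (3 ^ m) y"
proof -
  obtain a b where p: "p = (a, b)" "a \<in> zp" "b \<in> zp" "a m = 0" "b m = 0"
    using assms by (cases p) (auto simp: NB_def Zp2_iff)
  define ya where "ya = (\<lambda>n. a (n + m) div 3 ^ m)"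
  define yb where "yb = (\<lambda>n. b (n + m) div 3 ^ m)"
  have A: "ya \<in> zp" "a = (\<lambda>n. (3 ^ m * ya n) mod 3 ^ n)"
    using zp_div[OF p(2) p(4)] unfolding ya_def by blast+
  have Bd: "yb \<in> zp" "b = (\<lambda>n. (3 ^ m * yb n) mod 3 ^ n)"
    using zp_div[OF p(3) p(5)] unfolding yb_def by blast+
  have "(ya, yb) \<in> Zp2" using A Bd by (simp add: Zp2_iff)
  moreover have "mz (3 ^ m) (ya, yb) = (\<lambda>n. (3 ^ m * ya n) mod 3 ^ n, \<lambda>n. (3 ^ m * yb n) mod 3 ^ n)"
    unfolding mz_def zl_def by simp
  then have "p = mz (3 ^ m) (ya, yb)" using p(1) A(2) Bd(2) by simp
  ultimately show ?thesis by blast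
qed

lemma zp_tf:
  assumes "y \<in> zp" "(3 ^ m * y (n + m)) mod 3 ^ (n + m) = 0"
  shows "y n = 0"
proof -
  have "(3::int) ^ m * 3 ^ n dvd 3 ^ m * y (n + m)" using assms(2) by (simp add: power_add dvd_eq_mod_eq_0)
  then have "(3::int) ^ n dvd y (n + m)" using dvd_mult_cancel_left[of "(3::int)^m" "3^n" "y (n+m)"] by simp
  then have "y (n + m) mod 3 ^ n = 0" by (simp add: dvd_eq_mod_eq_0)
  then show ?thesis using zp_le[OF assms(1), of n "n + m"] by simp
qed

lemma NB_tf: assumes "y \<in> Zp2" "mz (3 ^ m) y \<in> NB (n + m)" shows "y \<in> NB n"
  using assms zp_tf[of "fst y" m n] zp_tf[of "snd y" m n]
  by (auto simp: NB_def comp_simps Zp2_iff)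

lemma cnj_pi_pow: "cnj (piw ^ m) * piw ^ m = 3 ^ m" using pi_pow_cnj[of m] by (simp add: mult.commute)

lemma NB_pi: assumes "y \<in> Zp2" "mz (piw ^ m) y \<in> NB (n + m)" shows "y \<in> NB n"
proof -
  have "mz (cnj (piw ^ m)) (mz (piw ^ m) y) \<in> NB (n + m)" using assms(2) by (rule NB_mz)
  then have "mz (3 ^ m) y \<in> NB (n + m)" by (simp add: mz_mz cnj_pi_pow)
  then show ?thesis using NB_tf assms(1) by blast
qed

lemma NB_all: assumes "p \<in> Zp2" "\<And>n. p \<in> NB n" shows "p = pzero"
  using assms by (cases p) (auto simp: NB_def Zp2_iff pzero_def zp_zero_def)


lemma Nbh_carrier: "Nbh K \<subseteq> carrier G0" by (auto simp: Nbh_iff G0_carrier NB_def)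

lemma mz_uminus: "mz (- r) p = pneg (mz r p)"
  unfolding mz_def zl_def pneg_def zp_neg_def
  by (rule p_eqI; rule ext; simp; rule mqI, (rule mq_rules)+, simp add: algebra_simps)

lemma mz_zero: "mz 0 p = pzero"
  unfolding mz_def zl_def pzero_def zp_zero_def by simp

lemma Nbh_subgroup: "subgroup (Nbh K) G0"
proof (rule G.subgroupI)
  show "Nbh K \<subseteq> carrier G0" by (rule Nbh_carrier)
  have "(0, pzero) \<in> Nbh K" using NB_pzero by (simp add: Nbh_iff)
  then show "Nbh K \<noteq> {}" by blast
next
  fix a assume "a \<in> Nbh K"
  then obtain p where a: "a = (0, p)" "p \<in> NB K" by (cases a) (auto simp: Nbh_iff)
  then show "inv\<^bsub>G0\<^esub> a \<in> Nbh K" using G0_inv0[OF NB_Zp2] by (simp add: Nbh_iff NB_pneg)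
next
  fix a b assume "a \<in> Nbh K" "b \<in> Nbh K"
  then obtain p q where "a = (0, p)" "p \<in> NB K" "b = (0, q)" "q \<in> NB K" by (cases a; cases b) (auto simp: Nbh_iff)
  then show "a \<otimes>\<^bsub>G0\<^esub> b \<in> Nbh K" using NB_Zp2 by (simp add: G0_mult Nbh_iff mz_one NB_padd)
qed

lemma Nbh_anti: "n \<le> K \<Longrightarrow> Nbh K \<subseteq> Nbh n"
proof
  fix x assume "n \<le> K" "x \<in> Nbh K"
  then show "x \<in> Nbh n" using NB_anti[of n K] by (auto simp: Nbh_iff)
qed

lemma closure_sub: "g0_closure A \<subseteq> A <#>\<^bsub>G0\<^esub> Nbh K"
  unfolding g0_closure_def by blast

lemma set_mult_mono: "A \<subseteq> A' \<Longrightarrow> N \<subseteq> N' \<Longrightarrow> A <#>\<^bsub>G0\<^esub> N \<subseteq> A' <#>\<^bsub>G0\<^esub> N'"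
  unfolding set_mult_def by blast

lemma closure_in_open:
  assumes "subgroup H G0" "Nbh N \<subseteq> H" "A \<subseteq> H" shows "g0_closure A \<subseteq> H"
proof -
  have "g0_closure A \<subseteq> H <#>\<^bsub>G0\<^esub> H" using closure_sub[of A N] set_mult_mono[OF assms(3) assms(2)] by blast
  also have "\<dots> \<subseteq> H" unfolding set_mult_def using subgroup.m_closed[OF assms(1)] by blast
  finally show ?thesis .
qed

lemma closureI:
  assumes "\<And>K. K \<ge> K0 \<Longrightarrow> x \<in> A <#>\<^bsub>G0\<^esub> Nbh K" shows "x \<in> g0_closure A"
  unfolding g0_closure_def
proof
  fix K
  have "x \<in> A <#>\<^bsub>G0\<^esub> Nbh (max K K0)" using assms by simp
  also have "\<dots> \<subseteq> A <#>\<^bsub>G0\<^esub> Nbh K" by (rule set_mult_mono) (simp_all add: Nbh_anti)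
  finally show "x \<in> A <#>\<^bsub>G0\<^esub> Nbh K" .
qed

lemma right_approx:
  assumes "k < 3" "p \<in> Zp2" "q \<in> Zp2" "padd (pneg q) p \<in> NB K" "(k, q) \<in> A"
  shows "(k, p) \<in> A <#>\<^bsub>G0\<^esub> Nbh K"
proof -
  define j where "j = (3 - k) mod 3"
  have "k = 0 \<or> k = 1 \<or> k = 2" using assms(1) by auto
  then have j: "(k + j) mod 3 = 0" by (auto simp: j_def)
  define \<nu> where "\<nu> = mz (omg ^ j) (padd (pneg q) p)"
  have nu: "\<nu> \<in> NB K" unfolding \<nu>_def using assms(4) by (rule NB_mz)
  have "(k, q) \<otimes>\<^bsub>G0\<^esub> (0, \<nu>) = (k, padd q (mz (omg ^ k * omg ^ j) (padd (pneg q) p)))"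
    using assms(1) NB_Zp2[OF nu] by (simp add: G0_mult \<nu>_def mz_mz)
  also have "omg ^ k * omg ^ j = 1"
    using j omg_pow_mod[of "k + j"] by (simp add: power_add)
  also have "padd q (mz 1 (padd (pneg q) p)) = p"
    using assms(2,3) by (simp add: mz_one padd_assoc[symmetric] padd_neg2 padd_zero)
  finally have "(k, p) = (k, q) \<otimes>\<^bsub>G0\<^esub> (0, \<nu>)" by simp
  moreover have "(0, \<nu>) \<in> Nbh K" using nu by (simp add: Nbh_iff)
  ultimately show ?thesis unfolding set_mult_def using assms(5) by blast
qed

lemma gen_sub:
  assumes "\<one>\<^bsub>G0\<^esub> \<in> T" "\<And>h. h \<in> S \<Longrightarrow> h \<in> T" "\<And>h. h \<in> S \<Longrightarrow> inv\<^bsub>G0\<^esub> h \<in> T"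
    "\<And>a b. a \<in> T \<Longrightarrow> b \<in> T \<Longrightarrow> a \<otimes>\<^bsub>G0\<^esub> b \<in> T"
  shows "generate G0 S \<subseteq> T"
proof
  fix x assume "x \<in> generate G0 S"
  then show "x \<in> T" by induction (auto intro: assms)
qed


lemma int_contra:
  fixes k l Y1 Y2 :: int
  assumes "(3::int) ^ N mod 3 ^ (2*N+1) = (k * Y1) mod 3 ^ (2*N+1)"
    "(3::int) ^ N mod 3 ^ (2*N+1) = (l * Y2) mod 3 ^ (2*N+1)"
    "0 = (k * Y2) mod 3 ^ (2*N+1)" "0 = (l * Y1) mod 3 ^ (2*N+1)"
  shows False
proof -
  define M :: int where "M = 3 ^ (2*N+1)"
  define A where "A = 3 ^ N - k * Y1"
  define D where "D = 3 ^ N - l * Y2"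
  have "M dvd A" using assms(1) unfolding A_def M_def by (simp add: mod_eq_dvd_iff)
  moreover have "M dvd D" using assms(2) unfolding D_def M_def by (simp add: mod_eq_dvd_iff)
  moreover have "M dvd k * Y2" using assms(3) unfolding M_def by (simp add: dvd_eq_mod_eq_0)
  ultimately have "M dvd (k * Y1) * D + A * (l * Y2) + A * D + (k * Y2) * (l * Y1)" by simp
  moreover have "(k * Y1) * D + A * (l * Y2) + A * D + (k * Y2) * (l * Y1) = 3 ^ N * 3 ^ N"
    unfolding A_def D_def by (simp add: algebra_simps)
  ultimately have "M dvd 3 ^ (2 * N)" by (simp add: power_add[symmetric] mult_2)
  then have "M \<le> 3 ^ (2 * N)" by (simp add: zdvd_imp_le)
  moreover have "(3::int) ^ (2 * N) < M" unfolding M_def by simp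
  ultimately show False by simp
qed

lemma lvl:
  assumes "io z = padd (mz (of_int k) y) (mz r \<nu>)" "\<nu> \<in> NB K"
  shows "re z mod 3 ^ K = (k * fst y K) mod 3 ^ K \<and> im z mod 3 ^ K = (k * snd y K) mod 3 ^ K"
proof -
  have a: "fst (io z) K = fst (padd (mz (of_int k) y) (mz r \<nu>)) K"
    and b: "snd (io z) K = snd (padd (mz (of_int k) y) (mz r \<nu>)) K" using assms(1) by simp_all
  have n: "fst \<nu> K = 0" "snd \<nu> K = 0" using assms(2) by (simp_all add: NB_def)
  show ?thesis using a b n by (simp add: comp_simps mod_add_left_eq)
qed

lemma cube:
  assumes "x \<in> carrier G0" "fst x \<noteq> 0"
  shows "x \<otimes>\<^bsub>G0\<^esub> (x \<otimes>\<^bsub>G0\<^esub> x) = \<one>\<^bsub>G0\<^esub>"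
proof -
  obtain k p where x: "x = (k, p)" "k < 3" "p \<in> Zp2" "k \<noteq> 0" using assms by (cases x) (auto simp: G0_carrier)
  have k: "k = 1 \<or> k = 2" using x by auto
  have "x \<otimes>\<^bsub>G0\<^esub> (x \<otimes>\<^bsub>G0\<^esub> x) = ((k + (k + k) mod 3) mod 3, mz (1 + omg ^ k + omg ^ k * omg ^ k) p)"
    using x by (simp add: G0_mult mz_padd mz_mz mz_add mz_one padd_assoc)
  also have "1 + omg ^ k + omg ^ k * omg ^ k = 0" using k
    by (auto simp: omg_def zw_eq_iff numeral_2_eq_2)
  also have "(k + (k + k) mod 3) mod 3 = 0" using k by auto
  finally show ?thesis by (simp add: mz_zero G0_one)
qed

lemma lower_bound:
  assumes H: "subgroup H G0" "Nbh N \<subseteq> H" and S: "finite S" "top_generates H S"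
  shows "2 \<le> card S"
proof (rule ccontr)
  assume "\<not> 2 \<le> card S"
  then have cs: "card S = 0 \<or> card S = 1" by auto
  have SH: "S \<subseteq> H" and cl: "g0_closure (generate G0 S) = H" using S(2) by (auto simp: top_generates_def)
  have Sc: "S \<subseteq> carrier G0" using SH subgroup.subset[OF H(1)] by blast
  obtain T y0 where T: "generate G0 S \<subseteq> T" "y0 \<in> Zp2" "\<And>a. a \<in> T \<Longrightarrow> fst a = 0 \<Longrightarrow> \<exists>k::int. a = (0, mz (of_int k) y0)"
  proof (cases "card S = 0")
    case True
    then have "S = {}" using S(1) by simp
    have "generate G0 S \<subseteq> {\<one>\<^bsub>G0\<^esub>}" by (rule gen_sub) (auto simp: \<open>S = {}\<close>)
    moreover have "\<exists>k::int. a = (0, mz (of_int k) pzero)" if "a \<in> {\<one>\<^bsub>G0\<^esub>}" for a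
      using that by (auto simp: G0_one mz_pzero)
    ultimately show ?thesis using that[of "{\<one>\<^bsub>G0\<^esub>}" pzero] by simp
  next
    case False
    then obtain x where Sx: "S = {x}" using cs by (auto simp: card_1_singleton_iff)
    then have xc: "x \<in> carrier G0" using Sc by simp
    show ?thesis
    proof (cases "fst x = 0")
      case True
      then obtain y0 where x: "x = (0, y0)" "y0 \<in> Zp2" using xc by (cases x) (auto simp: G0_carrier)
      let ?T = "{(0::nat, mz (of_int k) y0) | k::int. True}"
      have "generate G0 S \<subseteq> ?T"
      proof (rule gen_sub)
        show "\<one>\<^bsub>G0\<^esub> \<in> ?T" by (auto simp: G0_one mz_zero intro: exI[of _ 0])
      next
        fix h assume "h \<in> S" then have h: "h = (0, y0)" using Sx x by simp
        show "h \<in> ?T" using h x(2) by (auto simp: mz_one intro!: exI[of _ 1])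
        show "inv\<^bsub>G0\<^esub> h \<in> ?T" using h x(2) G0_inv0
          by (auto simp: mz_one mz_uminus intro!: exI[of _ "-1"])
      next
        fix a b assume "a \<in> ?T" "b \<in> ?T"
        then obtain i j where "a = (0, mz (of_int i) y0)" "b = (0, mz (of_int j) y0)" by blast
        then have "a \<otimes>\<^bsub>G0\<^esub> b = (0, mz (of_int (i + j)) y0)"
          using x(2) by (simp add: G0_mult mz_one mz_add)
        then show "a \<otimes>\<^bsub>G0\<^esub> b \<in> ?T" by blast
      qed
      then show ?thesis using that[of ?T y0] x(2) by blast
    next
      case False
      let ?x2 = "x \<otimes>\<^bsub>G0\<^esub> x"
      have c3: "x \<otimes>\<^bsub>G0\<^esub> ?x2 = \<one>\<^bsub>G0\<^esub>" by (rule cube[OF xc False])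
      have x2c: "?x2 \<in> carrier G0" using xc by (rule G.m_closed[OF _ xc])
      have c3': "?x2 \<otimes>\<^bsub>G0\<^esub> x = \<one>\<^bsub>G0\<^esub>" using c3 G.m_assoc[OF xc xc xc] by simp
      have c4: "?x2 \<otimes>\<^bsub>G0\<^esub> ?x2 = x"
        using G.m_assoc[OF xc xc x2c] c3 xc by simp
      let ?T = "{\<one>\<^bsub>G0\<^esub>, x, ?x2}"
      have "generate G0 S \<subseteq> ?T"
      proof (rule gen_sub)
        fix h assume "h \<in> S" then have h: "h = x" using Sx by simp
        show "h \<in> ?T" using h by simp
        have "inv\<^bsub>G0\<^esub> x = ?x2" by (rule G.inv_equality[OF c3' xc x2c])
        then show "inv\<^bsub>G0\<^esub> h \<in> ?T" using h by simp
      next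
        fix a b assume "a \<in> ?T" "b \<in> ?T"
        then have "a = \<one>\<^bsub>G0\<^esub> \<or> a = x \<or> a = ?x2" "b = \<one>\<^bsub>G0\<^esub> \<or> b = x \<or> b = ?x2" by auto
        then show "a \<otimes>\<^bsub>G0\<^esub> b \<in> ?T"
          by (elim disjE) (simp_all only: G.l_one[OF x2c] G.l_one[OF xc] G.r_one[OF x2c] G.r_one[OF xc] G.l_one[OF G.one_closed] c3 c3' c4 insert_iff simp_thms)
      qed (simp)
      moreover have "a = (0, mz (of_int 0) pzero)" if "a \<in> ?T" "fst a = 0" for a
      proof -
        obtain k p where xk: "x = (k, p)" "k < 3" "p \<in> Zp2" "k \<noteq> 0" using xc False by (cases x) (auto simp: G0_carrier)
        have "k = 1 \<or> k = 2" using xk by auto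
        then have "fst ?x2 \<noteq> 0" using xk by (auto simp: G0_mult)
        then show ?thesis using that False by (auto simp: G0_one mz_pzero)
      qed
      ultimately show ?thesis using that[of ?T pzero] pzero_Zp2 by blast
    qed
  qed
  define K where "K = 2 * N + 1"
  have gc: "generate G0 S \<subseteq> carrier G0" using G.generate_incl[OF Sc] .
  have key: "\<exists>k::int. re z mod 3 ^ K = (k * fst y0 K) mod 3 ^ K \<and> im z mod 3 ^ K = (k * snd y0 K) mod 3 ^ K"
    if "(0, io z) \<in> Nbh N" for z
  proof -
    have "(0, io z) \<in> generate G0 S <#>\<^bsub>G0\<^esub> Nbh K" using that H(2) cl closure_sub[of _ K] by blast
    then obtain a n where an: "a \<in> generate G0 S" "n \<in> Nbh K" "(0, io z) = a \<otimes>\<^bsub>G0\<^esub> n"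
      unfolding set_mult_def by blast
    have ac: "a \<in> carrier G0" using an(1) gc by blast
    obtain ka pa where a0: "a = (ka, pa)" by (cases a) blast
    have a: "a = (ka, pa)" "ka < 3" "pa \<in> Zp2" using ac a0 by (simp_all add: G0_carrier)
    obtain \<nu> where n: "n = (0, \<nu>)" "\<nu> \<in> NB K" using an(2) by (cases n) (auto simp: Nbh_iff)
    have e: "(0, io z) = (ka, padd pa (mz (omg ^ ka) \<nu>))" using an(3) a n NB_Zp2 by (simp add: G0_mult)
    then have "ka = 0" by simp
    then obtain k where "pa = mz (of_int k) y0" using T(3) an(1) T(1) a(1) by fastforce
    then have "io z = padd (mz (of_int k) y0) (mz 1 \<nu>)" using e \<open>ka = 0\<close> by simp
    then show ?thesis using lvl n(2) by blast
  qed
  have "(0, io (3 ^ N)) \<in> Nbh N" by (simp add: Nbh_iff io_NB)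
  from key[OF this] obtain k where k: "3 ^ N mod 3 ^ K = (k * fst y0 K) mod 3 ^ K" "0 = (k * snd y0 K) mod 3 ^ K" by auto
  have "(0, io (ZW 0 (3 ^ N))) \<in> Nbh N" by (simp add: Nbh_iff io_NB)
  from key[OF this] obtain l where l: "3 ^ N mod 3 ^ K = (l * snd y0 K) mod 3 ^ K" "0 = (l * fst y0 K) mod 3 ^ K" by auto
  show False using int_contra[of N k "fst y0 K" l "snd y0 K"] k l unfolding K_def by simp
qed


lemma NB_swap: assumes "a \<in> Zp2" "b \<in> Zp2" "padd (pneg a) b \<in> NB K" shows "padd (pneg b) a \<in> NB K"
proof -
  have h: "((- fst a K) mod 3 ^ K + fst b K) mod 3 ^ K = 0" "((- snd a K) mod 3 ^ K + snd b K) mod 3 ^ K = 0"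
    using assms(3) by (simp_all add: NB_def comp_simps)
  then have "(- fst a K + fst b K) mod 3 ^ K = 0" "(- snd a K + snd b K) mod 3 ^ K = 0"
    by (simp_all only: mod_add_left_eq)
  then have "(3::int) ^ K dvd (- fst a K + fst b K)" "(3::int) ^ K dvd (- snd a K + snd b K)"
    by (simp_all only: dvd_eq_mod_eq_0)
  then have "(3::int) ^ K dvd (- fst b K + fst a K)" "(3::int) ^ K dvd (- snd b K + snd a K)"
    using dvd_minus_iff by (metis minus_add_distrib minus_minus add.commute)+
  then have "(- fst b K + fst a K) mod 3 ^ K = 0" "(- snd b K + snd a K) mod 3 ^ K = 0"
    by (simp_all only: dvd_eq_mod_eq_0)
  then have "((- fst b K) mod 3 ^ K + fst a K) mod 3 ^ K = 0" "((- snd b K) mod 3 ^ K + snd a K) mod 3 ^ K = 0"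
    by (simp_all only: mod_add_left_eq)
  then show ?thesis using assms(1,2) by (simp add: NB_def comp_simps)
qed

lemma trunc': "p \<in> Zp2 \<Longrightarrow> padd (pneg p) (io (tr K p)) \<in> NB K"
  using NB_swap[of "io (tr K p)" p K] trunc[of p K] io_Zp2 by blast

lemma subgroup_mult_closed: assumes "subgroup H G0" shows "H <#>\<^bsub>G0\<^esub> H \<subseteq> H"
proof
  fix x assume "x \<in> H <#>\<^bsub>G0\<^esub> H"
  then obtain a b where "a \<in> H" "b \<in> H" "x = a \<otimes>\<^bsub>G0\<^esub> b" unfolding set_mult_def by blast
  then show "x \<in> H" using subgroup.m_closed[OF assms] by simp
qed

lemma approx_in:
  assumes "subgroup H G0" "Nbh K \<subseteq> H" "(k, p) \<in> H" "q \<in> Zp2" "padd (pneg p) q \<in> NB K"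
  shows "(k, q) \<in> H"
proof -
  have "(k, p) \<in> carrier G0" using assms(1,3) subgroup.subset by blast
  then have "k < 3" "p \<in> Zp2" by (simp_all add: G0_carrier)
  then have "(k, q) \<in> {(k, p)} <#>\<^bsub>G0\<^esub> Nbh K" using right_approx[of k q p K "{(k,p)}"] assms(4,5) by simp
  also have "\<dots> \<subseteq> H <#>\<^bsub>G0\<^esub> H" using assms(2,3) by (intro set_mult_mono) auto
  also have "\<dots> \<subseteq> H" by (rule subgroup_mult_closed[OF assms(1)])
  finally show ?thesis .
qed

lemma B_mult: "q \<in> Zp2 \<Longrightarrow> k < 3 \<Longrightarrow> (0, p) \<otimes>\<^bsub>G0\<^esub> (k, q) = (k, padd p q)"
  by (simp add: G0_mult mz_one)

lemma io_mult: "(0, io z) \<otimes>\<^bsub>G0\<^esub> (0, io w) = (0, io (z + w))"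
  by (simp add: B_mult io_add)

lemma io_inv: "inv\<^bsub>G0\<^esub> (0, io z) = (0, io (- z))"
  by (simp add: G0_inv0 io_neg)

lemma io_carrier: "(0, io z) \<in> carrier G0" by (simp add: G0_carrier)

lemma int_pts_sub:
  assumes "subgroup T G0"
  shows "0 \<in> {z. (0, io z) \<in> T}" "\<And>x y. x \<in> {z. (0, io z) \<in> T} \<Longrightarrow> y \<in> {z. (0, io z) \<in> T} \<Longrightarrow> x - y \<in> {z. (0, io z) \<in> T}"
proof -
  show "0 \<in> {z. (0, io z) \<in> T}" using subgroup.one_closed[OF assms] by (simp add: G0_one io_zero)
  fix x y assume "x \<in> {z. (0, io z) \<in> T}" "y \<in> {z. (0, io z) \<in> T}"
  then have "(0, io x) \<otimes>\<^bsub>G0\<^esub> inv\<^bsub>G0\<^esub> (0, io y) \<in> T"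
    using subgroup.m_closed[OF assms] subgroup.m_inv_closed[OF assms] by simp
  then show "x - y \<in> {z. (0, io z) \<in> T}" by (simp add: io_inv io_mult)
qed

lemma int_pts_comb:
  assumes "subgroup T G0" "(0, io u) \<in> T" "(0, io v) \<in> T"
  shows "(0, io (of_int a * u + of_int b * v)) \<in> T"
proof -
  note s = int_pts_sub[OF assms(1)]
  have "u \<in> {z. (0, io z) \<in> T}" "v \<in> {z. (0, io z) \<in> T}" using assms(2,3) by simp_all
  then have "of_int a * u \<in> {z. (0, io z) \<in> T}" "of_int b * v \<in> {z. (0, io z) \<in> T}"
    using zsub_int_mult[OF s(1) s(2)] by blast+
  then have "(0, io (of_int a * u)) \<otimes>\<^bsub>G0\<^esub> (0, io (of_int b * v)) \<in> T"
    using subgroup.m_closed[OF assms(1)] by simp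
  then show ?thesis by (simp add: io_mult)
qed

lemma int_sub_mult:
  fixes S :: "int set"
  assumes "0 \<in> S" "\<And>x y. x \<in> S \<Longrightarrow> y \<in> S \<Longrightarrow> x - y \<in> S" "x \<in> S"
  shows "c * x \<in> S"
proof -
  have neg: "- y \<in> S" if "y \<in> S" for y using assms(2)[OF assms(1) that] by simp
  have add: "y + z \<in> S" if "y \<in> S" "z \<in> S" for y z using assms(2)[OF that(1) neg[OF that(2)]] by simp
  have nat: "int n * x \<in> S" for n
    by (induction n) (auto simp: assms algebra_simps intro: add)
  show ?thesis
  proof (cases "c \<ge> 0")
    case True then show ?thesis using nat[of "nat c"] by simp
  next
    case False then show ?thesis using neg[OF nat[of "nat (-c)"]] by simp
  qed
qed

lemma int_subgroup:
  fixes S :: "int set"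
  assumes "0 \<in> S" "\<And>x y. x \<in> S \<Longrightarrow> y \<in> S \<Longrightarrow> x - y \<in> S" "c \<in> S" "c \<noteq> 0"
  shows "\<exists>g\<in>S. \<forall>x\<in>S. g dvd x"
proof -
  have neg: "- y \<in> S" if "y \<in> S" for y using assms(2)[OF assms(1) that] by simp
  have "\<exists>x. x \<in> S \<and> 0 < x"
  proof (cases "c > 0")
    case True then show ?thesis using assms(3) by blast
  next
    case False then show ?thesis using assms(3,4) neg[of c] by (intro exI[of _ "-c"]) simp
  qed
  then obtain x0 where x0: "x0 \<in> S" "0 < x0" by blast
  define g where "g = (LEAST n::nat. int n \<in> S \<and> 0 < n)"
  have ex: "int (nat x0) \<in> S \<and> 0 < nat x0" using x0 by simp
  have g: "int g \<in> S" "0 < g" using LeastI[of "\<lambda>n. int n \<in> S \<and> 0 < n", OF ex] unfolding g_def by auto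
  have "int g dvd x" if "x \<in> S" for x
  proof -
    have "x mod int g = x - (x div int g) * int g" by (simp add: minus_div_mult_eq_mod)
    moreover have "(x div int g) * int g \<in> S" using int_sub_mult[OF assms(1,2) g(1)] by blast
    ultimately have ms: "x mod int g \<in> S" using assms(2)[OF that] by simp
    have "x mod int g = 0"
    proof (rule ccontr)
      assume "x mod int g \<noteq> 0"
      then have "0 < x mod int g" using g(2) by (simp add: order_neq_le_trans pos_mod_sign)
      then have "int (nat (x mod int g)) \<in> S \<and> 0 < nat (x mod int g)" using ms by simp
      then have "g \<le> nat (x mod int g)" unfolding g_def by (rule Least_le)
      moreover have "x mod int g < int g" using g(2) by simp
      ultimately show False using le_nat_iff[of "x mod int g" g] \<open>0 < x mod int g\<close> by simp
    qed
    then show ?thesis by (simp add: dvd_eq_mod_eq_0)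
  qed
  then show ?thesis using g(1) by blast
qed

lemma hermite:
  fixes L :: "zw set"
  assumes "0 \<in> L" "\<And>x y. x \<in> L \<Longrightarrow> y \<in> L \<Longrightarrow> x - y \<in> L" "ZW (3 ^ N) 0 \<in> L" "ZW 0 (3 ^ N) \<in> L"
  shows "\<exists>u\<in>L. \<exists>v\<in>L. \<forall>z\<in>L. \<exists>a b. z = of_int a * u + of_int b * v"
proof -
  define A where "A = {a. ZW a 0 \<in> L}"
  define Bs where "Bs = {b. \<exists>a. ZW a b \<in> L}"
  have "\<exists>g\<in>A. \<forall>x\<in>A. g dvd x"
  proof (rule int_subgroup)
    show "0 \<in> A" using assms(1) by (simp add: A_def zero_zw_def)
    show "x - y \<in> A" if "x \<in> A" "y \<in> A" for x y
      using assms(2)[of "ZW x 0" "ZW y 0"] that by (simp add: A_def minus_zw_def)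
    show "3 ^ N \<in> A" using assms(3) by (simp add: A_def)
  qed simp
  then obtain g1 where g1: "ZW g1 0 \<in> L" "\<And>a. ZW a 0 \<in> L \<Longrightarrow> g1 dvd a" unfolding A_def by blast
  have "\<exists>g\<in>Bs. \<forall>x\<in>Bs. g dvd x"
  proof (rule int_subgroup)
    show "0 \<in> Bs" using assms(1) by (auto simp: Bs_def zero_zw_def)
    show "x - y \<in> Bs" if hxy: "x \<in> Bs" "y \<in> Bs" for x y
    proof -
      obtain a b where "ZW a x \<in> L" "ZW b y \<in> L" using hxy unfolding Bs_def by blast
      then have "ZW (a - b) (x - y) \<in> L" using assms(2) by (fastforce simp: minus_zw_def)
      then show ?thesis by (auto simp: Bs_def)
    qed
    show "3 ^ N \<in> Bs" using assms(4) by (auto simp: Bs_def)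
  qed simp
  then obtain g2 c where g2: "ZW c g2 \<in> L" "\<And>a b. ZW a b \<in> L \<Longrightarrow> g2 dvd b" unfolding Bs_def by blast
  have "\<forall>z\<in>L. \<exists>a b. z = of_int a * ZW g1 0 + of_int b * ZW c g2"
  proof
    fix z assume z: "z \<in> L"
    have "g2 dvd im z" using g2(2)[of "re z" "im z"] z by simp
    then obtain beta where beta: "im z = beta * g2" by (metis dvdE mult.commute)
    have "z - of_int beta * ZW c g2 \<in> L"
      using assms(2)[OF z, of "of_int beta * ZW c g2"] int_sub_mult zsub_int_mult[OF assms(1,2) g2(1)] by blast
    moreover have "z - of_int beta * ZW c g2 = ZW (re z - beta * c) 0" using beta by (simp add: zw_eq_iff)
    ultimately have "g1 dvd (re z - beta * c)" using g1(2) by simp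
    then obtain alpha where alpha: "re z - beta * c = alpha * g1" by (metis dvdE mult.commute)
    have "z = of_int alpha * ZW g1 0 + of_int beta * ZW c g2" using alpha beta by (simp add: zw_eq_iff algebra_simps)
    then show "\<exists>a b. z = of_int a * ZW g1 0 + of_int b * ZW c g2" by blast
  qed
  then show ?thesis using g1(1) g2(1) by blast
qed


lemma B_iff: "x \<in> B \<longleftrightarrow> fst x = 0 \<and> snd x \<in> Zp2"
  by (cases x) (auto simp: B_def Zp2_iff)

lemma dgen_eq2:
  assumes "subgroup H G0" "Nbh N \<subseteq> H" "finite S" "card S \<le> 2" "top_generates H S"
  shows "dgen H = 2"
proof -
  have "2 \<le> card S" by (rule lower_bound[OF assms(1,2,3,5)])
  then have c: "card S = 2" using assms(4) by simp
  show ?thesis unfolding dgen_def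
  proof (rule Least_equality)
    show "\<exists>S. finite S \<and> card S = 2 \<and> top_generates H S" using assms(3,5) c by blast
  next
    fix n assume "\<exists>S. finite S \<and> card S = n \<and> top_generates H S"
    then obtain S' where "finite S'" "card S' = n" "top_generates H S'" by blast
    then show "2 \<le> n" using lower_bound[OF assms(1,2)] by blast
  qed
qed

lemma gen_sub_H: "subgroup H G0 \<Longrightarrow> S \<subseteq> H \<Longrightarrow> generate G0 S \<subseteq> H"
  by (rule G.generate_subgroup_incl)

lemma gen_subgroup: "subgroup H G0 \<Longrightarrow> S \<subseteq> H \<Longrightarrow> subgroup (generate G0 S) G0"
  by (rule G.generate_is_subgroup) (use subgroup.subset in blast)

lemma partI:
  assumes H: "subgroup H G0" "Nbh N \<subseteq> H" "H \<subseteq> B"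
  shows "\<exists>S. finite S \<and> card S \<le> 2 \<and> top_generates H S"
proof -
  define L where "L = {z. (0, io z) \<in> H}"
  note s = int_pts_sub[OF H(1)]
  have "(0, io (ZW (3 ^ N) 0)) \<in> Nbh N" "(0, io (ZW 0 (3 ^ N))) \<in> Nbh N" by (simp_all add: Nbh_iff io_NB)
  then have "ZW (3 ^ N) 0 \<in> L" "ZW 0 (3 ^ N) \<in> L" using H(2) unfolding L_def by auto
  then obtain u v where uv: "u \<in> L" "v \<in> L" "\<And>z. z \<in> L \<Longrightarrow> \<exists>a b. z = of_int a * u + of_int b * v"
    using hermite[of L N] s unfolding L_def by blast
  define S where "S = {(0::nat, io u), (0, io v)}"
  have SH: "S \<subseteq> H" using uv unfolding S_def L_def by auto
  have fin: "finite S" "card S \<le> 2" unfolding S_def by (auto simp: card_insert_if)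
  have genH: "generate G0 S \<subseteq> H" by (rule gen_sub_H[OF H(1) SH])
  have gsub: "subgroup (generate G0 S) G0" by (rule gen_subgroup[OF H(1) SH])
  have uvg: "(0, io u) \<in> generate G0 S" "(0, io v) \<in> generate G0 S" unfolding S_def by (auto intro: generate.incl)
  have "g0_closure (generate G0 S) = H"
  proof
    show "g0_closure (generate G0 S) \<subseteq> H" by (rule closure_in_open[OF H(1,2) genH])
  next
    show "H \<subseteq> g0_closure (generate G0 S)"
    proof
      fix h assume h: "h \<in> H"
      then obtain p where hp: "h = (0, p)" "p \<in> Zp2" using H(3) by (cases h) (auto simp: B_iff)
      show "h \<in> g0_closure (generate G0 S)"
      proof (rule closureI[of N])
        fix K assume K: "N \<le> K"
        define t where "t = tr K p"
        have NK: "Nbh K \<subseteq> H" using Nbh_anti[OF K] H(2) by blast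
        have "(0, io t) \<in> H" using approx_in[OF H(1) NK, of 0 p "io t"] h hp trunc'[OF hp(2)] unfolding t_def by simp
        then obtain a b where "t = of_int a * u + of_int b * v" using uv(3) unfolding L_def by blast
        then have "(0, io t) \<in> generate G0 S" using int_pts_comb[OF gsub uvg] by simp
        then show "h \<in> generate G0 S <#>\<^bsub>G0\<^esub> Nbh K"
          using right_approx[of 0 p "io t" K "generate G0 S"] hp trunc[OF hp(2)] unfolding t_def by simp
      qed
    qed
  qed
  then have "top_generates H S" using SH by (simp add: top_generates_def)
  then show ?thesis using fin by blast
qed


definition ckv :: "zw \<Rightarrow> nat \<Rightarrow> zw" where
  "ckv v k = (if k = 0 then 0 else if k = 1 then v else v + omg * v)"

lemma ckv_add: assumes "k < 3" "l < 3" shows "ckv v ((k + l) mod 3) = ckv v k + omg ^ k * ckv v l"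
proof -
  have "k = 0 \<or> k = 1 \<or> k = 2" "l = 0 \<or> l = 1 \<or> l = 2" using assms by auto
  then show ?thesis
    by (elim disjE) (simp_all add: ckv_def zw_eq_iff omg_def power2_eq_square algebra_simps)
qed

lemma padd_swap4: "padd (padd a c) (padd b d) = padd (padd a b) (padd c d)"
  by (metis padd_assoc padd_comm)

lemma mq_mod2: "mq m a a' \<Longrightarrow> mq m (a mod m) a'" by (simp add: mq_def)

lemma padd_cancel_c: "padd (pneg (padd a c)) (padd b c) = padd (pneg a) b"
  unfolding padd_def pneg_def zp_add_def zp_neg_def
  by (rule p_eqI; rule ext; simp only: fst_conv snd_conv; rule mqI, (rule mq_mod2 mq_add mq_diff mq_mult mq_neg mq_refl)+, simp add: algebra_simps)

lemma padd_diff_right: "a \<in> Zp2 \<Longrightarrow> padd (padd a (pneg c)) c = a"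
  by (simp add: padd_assoc padd_neg padd_zero2)
lemma padd_cancel_right: "a \<in> Zp2 \<Longrightarrow> padd (padd a c) (pneg c) = a"
  by (simp add: padd_assoc padd_neg2 padd_zero2)
lemma padd_pneg_left: "b \<in> Zp2 \<Longrightarrow> padd a (padd (pneg a) b) = b"
  by (simp add: padd_assoc[symmetric] padd_neg2 padd_zero)

lemma conj_omg:
  assumes T: "subgroup T G0" "(1, io v0) \<in> T" "(0, io z) \<in> T"
  shows "(0, io (omg * z)) \<in> T"
proof -
  have c: "(1::nat, io v0) \<in> carrier G0" "(0::nat, io z) \<in> carrier G0" "(0::nat, io (omg * z)) \<in> carrier G0"
    by (simp_all add: G0_carrier)
  have "(0, io (omg * z)) \<otimes>\<^bsub>G0\<^esub> (1, io v0) = (1, io v0) \<otimes>\<^bsub>G0\<^esub> (0, io z)"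
    by (simp add: G0_mult mz_one mz_io io_add[symmetric] add.commute)
  then have "(0, io (omg * z)) = ((1, io v0) \<otimes>\<^bsub>G0\<^esub> (0, io z)) \<otimes>\<^bsub>G0\<^esub> inv\<^bsub>G0\<^esub> (1, io v0)"
    using G.inv_solve_right[OF c(3) _ c(1)] c by simp
  then show ?thesis using T subgroup.m_closed[OF T(1)] subgroup.m_inv_closed[OF T(1)] by metis
qed

lemma ck_in:
  assumes T: "subgroup T G0" "(1, io v0) \<in> T" "k < 3"
  shows "(k, io (ckv v0 k)) \<in> T"
proof -
  have "k = 0 \<or> k = 1 \<or> k = 2" using assms by auto
  moreover have "(0, io (ckv v0 0)) \<in> T" using subgroup.one_closed[OF T(1)] by (simp add: ckv_def G0_one io_zero)
  moreover have "(1, io (ckv v0 1)) \<in> T" using T(2) by (simp add: ckv_def)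
  moreover have "(1, io v0) \<otimes>\<^bsub>G0\<^esub> (1, io v0) = (2, io (ckv v0 2))"
    by (simp add: G0_mult ckv_def mz_io io_add)
  then have "(2, io (ckv v0 2)) \<in> T" using subgroup.m_closed[OF T(1) T(2) T(2)] by simp
  ultimately show ?thesis by auto
qed

definition phi :: "zw \<Rightarrow> zw \<Rightarrow> g0elt \<Rightarrow> g0elt" where
  "phi gam v x = (fst x, padd (mz gam (snd x)) (io (ckv v (fst x))))"

lemma phi_mult:
  assumes "k < 3" "l < 3" "p \<in> Zp2" "q \<in> Zp2"
  shows "phi gam v ((k, p) \<otimes>\<^bsub>G0\<^esub> (l, q)) = phi gam v (k, p) \<otimes>\<^bsub>G0\<^esub> phi gam v (l, q)"
proof -
  have e: "mz (omg ^ k) (mz gam q) = mz (gam * omg ^ k) q" by (simp add: mz_mz mult.commute)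
  show ?thesis using assms
    by (simp add: phi_def G0_mult mz_padd mz_mz e ckv_add mz_io io_add padd_swap4) (simp add: mult.commute)
qed

locale P2 =
  fixes H N v0 m
  assumes sg: "subgroup H G0" and NH: "Nbh N \<subseteq> H" and gH: "(1, io v0) \<in> H"
    and I: "\<And>z. (0, io z) \<in> H \<longleftrightarrow> (\<exists>r. z = piw ^ m * r)"
begin

abbreviation "gam \<equiv> piw ^ m"
abbreviation "ph \<equiv> phi gam v0"

lemma Hc: "H \<subseteq> carrier G0" using subgroup.subset[OF sg] .

lemma NK: "N \<le> K \<Longrightarrow> Nbh K \<subseteq> H" using Nbh_anti NH by blast

lemma mzH: assumes "p \<in> Zp2" shows "(0, mz gam p) \<in> H"
proof -
  define t where "t = tr N p"
  have "(0, io (gam * t)) \<in> H" using I by blast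
  moreover have "padd (pneg (io (gam * t))) (mz gam p) \<in> NB N"
    using NB_mz[OF trunc[OF assms], of gam N] by (simp add: t_def mz_padd mz_pneg mz_io)
  ultimately show ?thesis using approx_in[OF sg NH, of 0 "io (gam * t)" "mz gam p"] assms by simp
qed

lemma phi_H: assumes "x \<in> carrier G0" shows "ph x \<in> H"
proof -
  obtain k p where x: "x = (k, p)" "k < 3" "p \<in> Zp2" using assms by (cases x) (auto simp: G0_carrier)
  have "(0, mz gam p) \<otimes>\<^bsub>G0\<^esub> (k, io (ckv v0 k)) = ph x" using x by (simp add: B_mult phi_def)
  then show ?thesis using subgroup.m_closed[OF sg mzH[OF x(3)] ck_in[OF sg gH x(2)]] by simp
qed

lemma phi_surj:
  assumes "(k, p) \<in> H" shows "\<exists>y \<in> Zp2. (k, p) = ph (k, y)"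
proof -
  have kp: "k < 3" "p \<in> Zp2" using assms Hc by (auto simp: G0_carrier)
  define c where "c = io (ckv v0 k)"
  have cH: "(k, c) \<in> H" unfolding c_def using ck_in[OF sg gH kp(1)] .
  define q where "q = padd p (pneg c)"
  have q: "q \<in> Zp2" unfolding q_def c_def using kp by simp
  have "(0, q) \<otimes>\<^bsub>G0\<^esub> (k, c) = (k, p)" using kp by (simp add: B_mult q_def c_def padd_diff_right)
  then have "(0, q) = (k, p) \<otimes>\<^bsub>G0\<^esub> inv\<^bsub>G0\<^esub> (k, c)"
    using G.inv_solve_right[of "(0, q)" "(k, p)" "(k, c)"] kp q by (simp add: G0_carrier c_def)
  then have qH: "(0, q) \<in> H" using subgroup.m_closed[OF sg assms subgroup.m_inv_closed[OF sg cH]] by simp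
  define K where "K = N + m"
  define t where "t = tr K q"
  have "(0, io t) \<in> H" using approx_in[OF sg NK[of K] qH, of "io t"] trunc'[OF q] unfolding K_def t_def by simp
  then obtain r where r: "t = gam * r" using I by blast
  have "padd (pneg (io t)) q \<in> NB m" using trunc[OF q, of K] NB_anti[of m K] unfolding t_def K_def by auto
  then obtain y' where y': "y' \<in> Zp2" "padd (pneg (io t)) q = mz (3 ^ m) y'" using NB_div by blast
  have "q = padd (io t) (padd (pneg (io t)) q)" using trunc_decomp[OF q, of K] unfolding t_def by simp
  also have "\<dots> = mz gam (padd (io r) (mz (cnj gam) y'))"
    using y'(2) by (simp add: r mz_padd mz_io mz_mz pi_pow_cnj)
  finally have qe: "q = mz gam (padd (io r) (mz (cnj gam) y'))" .
  have pq: "padd q c = p" unfolding q_def using kp padd_diff_right by simp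
  have "ph (k, padd (io r) (mz (cnj gam) y')) = (k, padd q c)"
    using qe by (simp add: phi_def c_def)
  then have "ph (k, padd (io r) (mz (cnj gam) y')) = (k, p)" using pq by simp
  then show ?thesis using y' by (intro bexI[of _ "padd (io r) (mz (cnj gam) y')"]) auto
qed

lemma phi_inj: "inj_on ph (carrier G0)"
proof (rule inj_onI)
  fix x y assume x: "x \<in> carrier G0" and y: "y \<in> carrier G0" and e: "ph x = ph y"
  obtain k p where xk: "x = (k, p)" "p \<in> Zp2" using x by (cases x) (auto simp: G0_carrier)
  obtain l q where yl: "y = (l, q)" "q \<in> Zp2" using y by (cases y) (auto simp: G0_carrier)
  have kl: "k = l" using e xk yl by (simp add: phi_def)
  have "padd (mz gam p) (io (ckv v0 k)) = padd (mz gam q) (io (ckv v0 k))" using e xk yl kl by (simp add: phi_def)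
  then have "padd (padd (mz gam p) (io (ckv v0 k))) (pneg (io (ckv v0 k))) = padd (padd (mz gam q) (io (ckv v0 k))) (pneg (io (ckv v0 k)))"
    by simp
  then have em: "mz gam p = mz gam q" using xk yl by (simp add: padd_cancel_right)
  define d where "d = padd (pneg p) q"
  have d: "d \<in> Zp2" using xk yl by (simp add: d_def)
  have "mz gam d = pzero" unfolding d_def by (simp add: mz_padd mz_pneg em padd_neg)
  then have "d \<in> NB n" for n using NB_pi[OF d, of m n] NB_pzero by simp
  then have "d = pzero" using NB_all[OF d] by blast
  then have "q = p" using padd_pneg_left[OF yl(2), of p] xk(2) unfolding d_def by (simp add: padd_zero2)
  then show "x = y" using xk yl kl by simp
qed

lemma phi_image: "ph ` carrier G0 = H"
proof
  show "ph ` carrier G0 \<subseteq> H" using phi_H by blast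
next
  show "H \<subseteq> ph ` carrier G0"
  proof
    fix h assume h: "h \<in> H"
    then obtain k p where hp: "h = (k, p)" by (cases h) blast
    then have k: "k < 3" using h Hc by (auto simp: G0_carrier)
    obtain y where "y \<in> Zp2" "(k, p) = ph (k, y)" using phi_surj h hp by blast
    then show "h \<in> ph ` carrier G0" using hp k by (auto simp: G0_carrier)
  qed
qed

lemma phi_iso: "ph \<in> iso G0 (G0\<lparr>carrier := H\<rparr>)"
proof -
  have "ph \<in> hom G0 (G0\<lparr>carrier := H\<rparr>)"
  proof (rule homI)
    fix x assume "x \<in> carrier G0" then show "ph x \<in> carrier (G0\<lparr>carrier := H\<rparr>)" using phi_H by simp
  next
    fix x y assume x: "x \<in> carrier G0" and y: "y \<in> carrier G0"
    obtain k p where xk: "x = (k, p)" "k < 3" "p \<in> Zp2" using x by (cases x) (auto simp: G0_carrier)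
    obtain l q where yl: "y = (l, q)" "l < 3" "q \<in> Zp2" using y by (cases y) (auto simp: G0_carrier)
    show "ph (x \<otimes>\<^bsub>G0\<^esub> y) = ph x \<otimes>\<^bsub>G0\<lparr>carrier := H\<rparr>\<^esub> ph y"
      using phi_mult[OF xk(2) yl(2) xk(3) yl(3)] xk yl by simp
  qed
  moreover have "bij_betw ph (carrier G0) (carrier (G0\<lparr>carrier := H\<rparr>))"
    using phi_inj phi_image by (simp add: bij_betw_def)
  ultimately show ?thesis by (simp add: iso_def)
qed

lemma top_iso: "top_iso_G0 H"
proof -
  define f where "f = inv_into (carrier G0) ph"
  have fiso: "f \<in> iso (G0\<lparr>carrier := H\<rparr>) G0" unfolding f_def by (rule G.iso_set_sym[OF phi_iso])
  have c1: "cont_hom H f" unfolding cont_hom_def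
  proof
    fix n
    have "f ` (H \<inter> Nbh (n + m)) \<subseteq> Nbh n"
    proof
      fix z assume "z \<in> f ` (H \<inter> Nbh (n + m))"
      then obtain x where x: "x \<in> H" "x \<in> Nbh (n + m)" "z = f x" by blast
      have xi: "x \<in> ph ` carrier G0" using x(1) phi_image by simp
      have zc: "z \<in> carrier G0" using inv_into_into[OF xi] x(3) unfolding f_def by simp
      have pz: "ph z = x" using f_inv_into_f[OF xi] x(3) unfolding f_def by simp
      obtain k y where zk: "z = (k, y)" "y \<in> Zp2" using zc by (cases z) (auto simp: G0_carrier)
      have "fst x = 0" "snd x \<in> NB (n + m)" using x(2) by (simp_all add: Nbh_iff)
      then have "k = 0" "mz gam y \<in> NB (n + m)"
        using pz zk by (auto simp: phi_def ckv_def io_zero padd_zero2)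
      then show "z \<in> Nbh n" using zk NB_pi[OF zk(2), of m n] by (simp add: Nbh_iff add.commute)
    qed
    then show "\<exists>m'. f ` (H \<inter> Nbh m') \<subseteq> Nbh n" by blast
  qed
  have injf: "inj_on f H" using fiso by (simp add: iso_def bij_betw_def)
  have invf: "inv_into H f x = ph x" if "x \<in> carrier G0" for x
  proof (rule inv_into_f_eq[OF injf])
    show "ph x \<in> H" using phi_H[OF that] .
    show "f (ph x) = x" unfolding f_def by (rule inv_into_f_f[OF phi_inj that])
  qed
  have c2: "cont_hom (carrier G0) (inv_into H f)" unfolding cont_hom_def
  proof
    fix n
    have "inv_into H f ` (carrier G0 \<inter> Nbh n) \<subseteq> Nbh n"
    proof
      fix z assume "z \<in> inv_into H f ` (carrier G0 \<inter> Nbh n)"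
      then obtain x where x: "x \<in> carrier G0" "x \<in> Nbh n" "z = inv_into H f x" by blast
      obtain \<nu> where xn: "x = (0, \<nu>)" "\<nu> \<in> NB n" using x(2) by (cases x) (auto simp: Nbh_iff)
      have "z = ph x" using invf[OF x(1)] x(3) by simp
      then show "z \<in> Nbh n" using xn NB_Zp2[OF xn(2)]
        by (simp add: phi_def ckv_def io_zero padd_zero2 Nbh_iff NB_mz)
    qed
    then show "\<exists>m'. inv_into H f ` (carrier G0 \<inter> Nbh m') \<subseteq> Nbh n" by blast
  qed
  show ?thesis unfolding top_iso_G0_def using fiso c1 c2 by blast
qed

end


context P2 begin

lemma gen2: "\<exists>S. finite S \<and> card S \<le> 2 \<and> top_generates H S"
proof -
  define S where "S = {(1::nat, io v0), (0, io gam)}"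
  have gamH: "(0, io gam) \<in> H" using I[of gam] by (metis mult.right_neutral)
  have SH: "S \<subseteq> H" using gH gamH unfolding S_def by auto
  have fin: "finite S" "card S \<le> 2" unfolding S_def by (auto simp: card_insert_if)
  have genH: "generate G0 S \<subseteq> H" by (rule gen_sub_H[OF sg SH])
  have gsub: "subgroup (generate G0 S) G0" by (rule gen_subgroup[OF sg SH])
  have gg: "(1, io v0) \<in> generate G0 S" "(0, io gam) \<in> generate G0 S" unfolding S_def by (auto intro: generate.incl)
  note s = int_pts_sub[OF gsub]
  have zi: "zideal {z. (0, io z) \<in> generate G0 S}"
    by (rule zidealI[OF s]) (use conj_omg[OF gsub gg(1)] in auto)
  have gam_mult: "(0, io (r * gam)) \<in> generate G0 S" for r
    using zi gg(2) unfolding zideal_def by blast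
  have "g0_closure (generate G0 S) = H"
  proof
    show "g0_closure (generate G0 S) \<subseteq> H" by (rule closure_in_open[OF sg NH genH])
  next
    show "H \<subseteq> g0_closure (generate G0 S)"
    proof
      fix h assume h: "h \<in> H"
      then obtain k p where hp: "h = (k, p)" by (cases h) blast
      have k: "k < 3" "p \<in> Zp2" using h hp Hc by (auto simp: G0_carrier)
      obtain y where y: "y \<in> Zp2" "(k, p) = ph (k, y)" using phi_surj h hp by blast
      then have pe: "p = padd (mz gam y) (io (ckv v0 k))" by (simp add: phi_def)
      show "h \<in> g0_closure (generate G0 S)"
      proof (rule closureI[of N])
        fix K assume K: "N \<le> K"
        define t where "t = tr K y"
        define c where "c = ckv v0 k"
        have "(0, io (t * gam)) \<otimes>\<^bsub>G0\<^esub> (k, io c) = (k, io (t * gam + c))"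
          using k by (simp add: B_mult io_add)
        then have aG: "(k, io (t * gam + c)) \<in> generate G0 S"
          using subgroup.m_closed[OF gsub gam_mult[of t] ck_in[OF gsub gg(1) k(1)]] unfolding c_def by simp
        have "padd (pneg (io (t * gam + c))) p = padd (pneg (io (gam * t))) (mz gam y)"
          unfolding pe io_add c_def by (simp add: padd_cancel_c mult.commute)
        also have "\<dots> = mz gam (padd (pneg (io t)) y)" by (simp add: mz_padd mz_pneg mz_io)
        finally have "padd (pneg (io (t * gam + c))) p \<in> NB K"
          using NB_mz[OF trunc[OF y(1)], of gam K] unfolding t_def by simp
        then show "h \<in> generate G0 S <#>\<^bsub>G0\<^esub> Nbh K"
          using right_approx[of k p "io (t * gam + c)" K "generate G0 S"] k aG hp by simp
      qed
    qed
  qed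
  then have "top_generates H S" using SH by (simp add: top_generates_def)
  then show ?thesis using fin by blast
qed

end

lemma partII:
  assumes H: "subgroup H G0" "Nbh N \<subseteq> H" "h0 \<in> H" "fst h0 \<noteq> 0"
  shows "top_iso_G0 H \<and> (\<exists>S. finite S \<and> card S \<le> 2 \<and> top_generates H S)"
proof -
  have Hc: "H \<subseteq> carrier G0" using subgroup.subset[OF H(1)] .
  obtain k0 p0 where h0: "h0 = (k0, p0)" "k0 < 3" "p0 \<in> Zp2" "k0 \<noteq> 0" using H(3,4) Hc by (cases h0) (auto simp: G0_carrier)
  obtain p1 where p1: "(1, p1) \<in> H" "p1 \<in> Zp2"
  proof (cases "k0 = 1")
    case True then show ?thesis using that h0 H(3) by blast
  next
    case False
    then have "k0 = 2" using h0 by auto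
    have "h0 \<otimes>\<^bsub>G0\<^esub> h0 = (1, padd p0 (mz (omg ^ 2) p0))" using h0 \<open>k0 = 2\<close> by (simp add: G0_mult)
    moreover have "h0 \<otimes>\<^bsub>G0\<^esub> h0 \<in> H" using subgroup.m_closed[OF H(1) H(3) H(3)] .
    ultimately show ?thesis using that h0(3) by simp
  qed
  define v0 where "v0 = tr N p1"
  have gH: "(1, io v0) \<in> H" using approx_in[OF H(1) H(2) p1(1), of "io v0"] trunc'[OF p1(2)] unfolding v0_def by simp
  define I where "I = {z. (0, io z) \<in> H}"
  note s = int_pts_sub[OF H(1)]
  have zi: "zideal I" unfolding I_def
    by (rule zidealI[OF s]) (use conj_omg[OF H(1) gH] in auto)
  have "(0, io (3 ^ N)) \<in> Nbh N" by (simp add: Nbh_iff io_NB)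
  then have "3 ^ N \<in> I" using H(2) unfolding I_def by auto
  moreover have "piw ^ (2 * N) = (- omg) ^ N * 3 ^ N"
  proof -
    have "piw ^ (2 * N) = (piw ^ 2) ^ N" by (simp only: power_mult)
    also have "\<dots> = (3 * (- omg)) ^ N" by (simp only: pi_sq)
    also have "\<dots> = (- omg) ^ N * 3 ^ N" by (simp only: power_mult_distrib mult.commute)
    finally show ?thesis .
  qed
  ultimately have "piw ^ (2 * N) \<in> I" using zi unfolding zideal_def by simp
  then obtain m where m: "I = {piw ^ m * r | r. True}" using zideal_class[OF zi] by blast
  have Iz: "(0::nat, io z) \<in> H \<longleftrightarrow> (\<exists>r. z = piw ^ m * r)" for z
    using m unfolding I_def by blast
  interpret P: P2 H N v0 m by (rule P2.intro[OF H(1) H(2) gH Iz])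
  show ?thesis using P.top_iso P.gen2 by blast
qed

theorem mainTheorem8:
  shows "(\<forall>H. open_subgroup H \<and> \<not> H \<subseteq> B \<longrightarrow> top_iso_G0 H)
       \<and> (\<forall>H. open_subgroup H \<longrightarrow> dgen H = 2)"
proof (intro conjI allI impI)
  fix H assume a: "open_subgroup H \<and> \<not> H \<subseteq> B"
  then obtain N where H: "subgroup H G0" "Nbh N \<subseteq> H" unfolding open_subgroup_def by blast
  obtain h0 where "h0 \<in> H" "h0 \<notin> B" using a by blast
  then have "fst h0 \<noteq> 0" using subgroup.subset[OF H(1)] by (auto simp: B_iff G0_carrier)
  then show "top_iso_G0 H" using partII[OF H \<open>h0 \<in> H\<close>] by blast
next
  fix H assume a: "open_subgroup H"
  then obtain N where H: "subgroup H G0" "Nbh N \<subseteq> H" unfolding open_subgroup_def by blast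
  have "\<exists>S. finite S \<and> card S \<le> 2 \<and> top_generates H S"
  proof (cases "H \<subseteq> B")
    case True then show ?thesis using partI[OF H True] by blast
  next
    case False
    then obtain h0 where "h0 \<in> H" "h0 \<notin> B" by blast
    then have "fst h0 \<noteq> 0" using subgroup.subset[OF H(1)] by (auto simp: B_iff G0_carrier)
    then show ?thesis using partII[OF H \<open>h0 \<in> H\<close>] by blast
  qed
  then show "dgen H = 2" using dgen_eq2[OF H] by blast
qed


end
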